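(* Let $m,\delta>1$ be integers, $n=m\delta$, and let $V^1,V^2$ be two copies of $\mathbb{F}_2^n$, each written as $V^i=V^i_1\times\cdots\times V^i_\delta$ with $V^i_j\cong\mathbb{F}_2^m$ (brick $V^i_j$ consisting of coordinates $(j-1)m,\dots,jm-1$). Let $\gamma\in\mathrm{Sym}(\mathbb{F}_2^n)$ be a parallel S-Box, $(x_1,\dots,x_\delta)\gamma=(x_1\gamma_1,\dots,x_\delta\gamma_\delta)$ with $\gamma_j\in\mathrm{Sym}(\mathbb{F}_2^m)$ and $0\gamma_j\neq0$; let $\lambda$ be an invertible linear map of $\mathbb{F}_2^n$ which is non-type-preserving, and put $\rho=\gamma\lambda$. Let $V=V^1\times V^2$. For $k=(k_1,k_2)\in V$ let $\sigma_k:(x_1,x_2)\mapsto(x_1\boxplus k_1,x_2\boxplus k_2)$, where $\boxplus$ is addition modulo $2^n$ on each component, and let $\mathcal{P}:V\to V$, $(x_1,x_2)\mapsto(x_2,\,x_1\oplus x_2\rho)$, where $\oplus$ is bitwise XOR. Let $\Gamma_\infty=\langle \sigma_k\,\mathcal{P}\,\sigma_h : k,h\in V\rangle\le\mathrm{Sym}(V)$. Then $\Gamma_\infty$ is primitive on $V$.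
   Context: A vector $a=(a_0,\dots,a_{n-1})\in\mathbb{F}_2^n$ is identified with the integer $\sum_i a_i2^i$, and $\boxplus$ is addition of these integers modulo $2^n$. Maps act on the right and are composed left to right. Type of a subset: for $D\subseteq\mathbb{F}_2^n$, its type is the sequence of $\delta$ symbols whose $j$-th entry is "white" if the projection of $D$ onto the $j$-th brick has size $1$, "ruled" if it has size $t$ with $1<t<2^m$, and "black" if it is the whole brick. Non-type-preserving: an invertible linear map $\lambda$ of $\mathbb{F}_2^n$ is non-type-preserving if for every subset $D\subseteq\mathbb{F}_2^n$ whose type is (first $a$ entries white, then $b$ ruled, then $c$ black) with $a,c\ge0$, $b\in\{0,1\}$, $a+b+c=\delta$, not all-white and not all-black, the type of $D\lambda$ differs from the type of $D$. A group $G\le\mathrm{Sym}(V)$ is primitive if it is transitive and preserves no partition of $V$ other than $\{V\}$ and the partition into singletons. *)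

theory Defs
  imports Main "HOL-Library.Disjoint_Sets" "HOL-Algebra.Bij" "HOL-Algebra.Generated_Groups"
begin

text \<open>Vectors of F_2^n are represented by natural numbers in {..<2^n}: bit i of a
  is the coordinate a_i. Brick j (0-based, j < delta) consists of the coordinates
  j*m, ..., j*m+m-1; its projection is brick m j a.\<close>

definition brick :: "nat \<Rightarrow> nat \<Rightarrow> nat \<Rightarrow> nat" where
  "brick m j a = (a div 2 ^ (m * j)) mod 2 ^ m"

definition parallel_sbox :: "nat \<Rightarrow> nat \<Rightarrow> (nat \<Rightarrow> nat \<Rightarrow> nat) \<Rightarrow> nat \<Rightarrow> nat" where
  "parallel_sbox m \<delta> gs x = (\<Sum>j<\<delta>. gs j (brick m j x) * 2 ^ (m * j))"

text \<open>Invertible F_2-linear map of F_2^n (additivity w.r.t. XOR is F_2-linearity).\<close>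
definition inv_linear :: "nat \<Rightarrow> (nat \<Rightarrow> nat) \<Rightarrow> bool" where
  "inv_linear n L \<longleftrightarrow> bij_betw L {..<2 ^ n} {..<2 ^ n} \<and>
     (\<forall>x < 2 ^ n. \<forall>y < 2 ^ n. L (xor x y) = xor (L x) (L y))"

datatype brick_colour = White | Ruled | Black

definition brick_type :: "nat \<Rightarrow> nat set \<Rightarrow> nat \<Rightarrow> brick_colour" where
  "brick_type m D j =
     (if card (brick m j ` D) = 1 then White
      else if card (brick m j ` D) = 2 ^ m then Black else Ruled)"

definition std_type :: "nat \<Rightarrow> nat \<Rightarrow> nat \<Rightarrow> brick_colour" where
  "std_type a b j = (if j < a then White else if j < a + b then Ruled else Black)"

definition non_type_preserving :: "nat \<Rightarrow> nat \<Rightarrow> (nat \<Rightarrow> nat) \<Rightarrow> bool" where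
  "non_type_preserving m \<delta> L \<longleftrightarrow>
     (\<forall>D a b c. D \<subseteq> {..<2 ^ (m * \<delta>)} \<and> D \<noteq> {} \<and> b \<le> 1 \<and> a + b + c = \<delta>
        \<and> a \<noteq> \<delta> \<and> c \<noteq> \<delta>
        \<and> (\<forall>j<\<delta>. brick_type m D j = std_type a b j)
      \<longrightarrow> (\<exists>j<\<delta>. brick_type m (L ` D) j \<noteq> brick_type m D j))"

definition sigma :: "nat \<Rightarrow> nat \<times> nat \<Rightarrow> nat \<times> nat \<Rightarrow> nat \<times> nat" where
  "sigma n k x = ((fst x + fst k) mod 2 ^ n, (snd x + snd k) mod 2 ^ n)"

definition feistel :: "(nat \<Rightarrow> nat) \<Rightarrow> nat \<times> nat \<Rightarrow> nat \<times> nat" where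
  "feistel \<rho> x = (snd x, xor (fst x) (\<rho> (snd x)))"

definition Vspace :: "nat \<Rightarrow> (nat \<times> nat) set" where
  "Vspace n = {..<2 ^ n} \<times> {..<2 ^ n}"

text \<open>Gamma_infinity: maps act on the right, so sigma_k P sigma_h means first sigma_k,
  then P, then sigma_h.\<close>
definition Gamma_inf :: "nat \<Rightarrow> (nat \<Rightarrow> nat) \<Rightarrow> (nat \<times> nat \<Rightarrow> nat \<times> nat) set" where
  "Gamma_inf n \<rho> = generate (BijGroup (Vspace n))
     {restrict (sigma n h \<circ> feistel \<rho> \<circ> sigma n k) (Vspace n) | k h. k \<in> Vspace n \<and> h \<in> Vspace n}"

definition primitive_on :: "'a set \<Rightarrow> ('a \<Rightarrow> 'a) set \<Rightarrow> bool" where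
  "primitive_on X G \<longleftrightarrow>
     (\<forall>x\<in>X. \<forall>y\<in>X. \<exists>g\<in>G. g x = y) \<and>
     (\<forall>P. partition_on X P \<and> (\<forall>g\<in>G. \<forall>B\<in>P. g ` B \<in> P)
        \<longrightarrow> P = {X} \<or> P = {{x} | x. x \<in> X})"

end

theory Submission
  imports Defs
begin

lemma divmod_pow: "(x::nat) div 2^a mod 2^b = (x mod 2^(a+b)) div 2^a"
  by (simp add: power_add mod_mult2_eq)

lemma sum_bound:
  assumes "\<forall>i<d. f i < (2::nat)^m"
  shows "(\<Sum>i<d. f i * 2^(m*i)) < 2^(m*d)"
  using assms
proof (induction d)
  case 0 then show ?case by simp
next
  case (Suc d)
  have IH: "(\<Sum>i<d. f i * 2^(m*i)) < 2^(m*d)" using Suc by simp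
  have fd: "f d < 2^m" using Suc.prems by simp
  then have "(f d + 1) * 2^(m*d) \<le> 2^m * 2^(m*d)" by (intro mult_le_mono1) simp
  then have "f d * 2^(m*d) + 2^(m*d) \<le> 2^(m*Suc d)" by (simp add: power_add algebra_simps)
  then show ?case using IH by simp
qed

lemma brick_sum:
  assumes "\<forall>i<d. f i < (2::nat)^m" "j < d"
  shows "brick m j (\<Sum>i<d. f i * 2^(m*i)) = f j"
  using assms
proof (induction d)
  case 0 then show ?case by simp
next
  case (Suc d)
  define s where "s = (\<Sum>i<d. f i * 2^(m*i))"
  have sb: "s < 2^(m*d)" unfolding s_def using Suc.prems by (intro sum_bound) simp
  have fd: "f d < 2^m" using Suc.prems by simp
  show ?case
  proof (cases "j = d")
    case True
    have "(s + f d * 2^(m*d)) div 2^(m*d) = f d" using sb by simp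
    then show ?thesis using True fd by (simp add: brick_def s_def)
  next
    case False
    then have jd: "j < d" using Suc.prems by simp
    define e where "e = d - j - 1"
    have e: "d = j + Suc e" using jd by (simp add: e_def)
    have eq: "f d * 2^(m*d) = (f d * 2^(m * Suc e)) * 2^(m*j)"
      by (simp add: e power_add algebra_simps)
    have "(s + f d * 2^(m*d)) div 2^(m*j) = s div 2^(m*j) + f d * 2^(m * Suc e)"
      unfolding eq by (subst div_mult_self1) (simp_all add: add.commute)
    moreover have "(f d * 2^(m * Suc e)) mod 2^m = 0" by (simp add: power_add)
    ultimately have "(s + f d * 2^(m*d)) div 2^(m*j) mod 2^m = s div 2^(m*j) mod 2^m"
      by (simp add: mod_add_right_eq[symmetric])
    then have "brick m j (s + f d * 2^(m*d)) = brick m j s" by (simp add: brick_def)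
    moreover have "brick m j s = f j" unfolding s_def using Suc jd by simp
    ultimately show ?thesis by (simp add: s_def)
  qed
qed

lemma brick_lt: "brick m j x < 2^m" by (simp add: brick_def)

lemma brick_mod: assumes "j < d" shows "brick m j (x mod 2^(m*d)) = brick m j x"
proof -
  define e where "e = d - j - 1"
  have e: "d = j + Suc e" using assms by (simp add: e_def)
  have "(x mod 2^(m*d)) div 2^(m*j) = x div 2^(m*j) mod 2^(m*Suc e)"
    using divmod_pow[of x "m*j" "m*Suc e"] by (simp add: e algebra_simps)
  moreover have "x div 2^(m*j) mod 2^(m*Suc e) mod 2^m = x div 2^(m*j) mod 2^m"
    by (intro mod_mod_cancel) (simp add: le_imp_power_dvd)
  ultimately show ?thesis by (simp add: brick_def)
qed

lemma recon: "x < 2^(m*d) \<Longrightarrow> x = (\<Sum>j<d. brick m j x * 2^(m*j))"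
proof (induction d arbitrary: x)
  case 0 then show ?case by simp
next
  case (Suc d)
  have "x mod 2^(m*d) < 2^(m*d)" by simp
  then have "x mod 2^(m*d) = (\<Sum>j<d. brick m j (x mod 2^(m*d)) * 2^(m*j))" using Suc.IH by blast
  also have "\<dots> = (\<Sum>j<d. brick m j x * 2^(m*j))"
    by (intro sum.cong) (simp_all add: brick_mod)
  finally have a: "x mod 2^(m*d) = (\<Sum>j<d. brick m j x * 2^(m*j))" .
  have "x div 2^(m*d) < 2^m" using Suc.prems
    by (simp add: less_mult_imp_div_less power_add mult.commute)
  then have b: "x div 2^(m*d) = brick m d x" by (simp add: brick_def)
  have e: "x = (\<Sum>j<d. brick m j x * 2^(m*j)) + brick m d x * 2^(m*d)"
    using a b mod_div_mult_eq[of x "2^(m*d)"] by simp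
  have "(\<Sum>j<Suc d. brick m j x * 2^(m*j)) = (\<Sum>j<d. brick m j x * 2^(m*j)) + brick m d x * 2^(m*d)"
    by simp
  then show ?case by (rule trans[OF e sym])
qed


lemma xor_lt: "(a::nat) < 2^n \<Longrightarrow> b < 2^n \<Longrightarrow> xor a b < 2^n"
  by (metis take_bit_nat_eq_self_iff take_bit_xor)

lemma and_pow_small: "(y::nat) < 2^k \<Longrightarrow> and (2^k) y = 0"
proof -
  assume "y < 2^k"
  then have "take_bit k y = y" by (simp add: take_bit_nat_eq_self_iff)
  then have "\<not> bit y k" by (metis bit_take_bit_iff less_irrefl)
  then show ?thesis by (intro bit_eqI) (auto simp: bit_and_iff bit_exp_iff)
qed

lemma xor_h:
  assumes "n \<ge> 1" "(y::nat) < 2^n"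
  shows "xor (2^(n-1)) y = (y + 2^(n-1)) mod 2^n"
proof -
  have N: "(2::nat)^n = 2^(n-1) + 2^(n-1)" using assms(1)
    by (metis Suc_diff_1 less_le_trans mult_2 power_Suc zero_less_one)
  show ?thesis
  proof (cases "y < 2^(n-1)")
    case True
    then have "xor (2^(n-1)) y = 2^(n-1) + y"
      using and_pow_small disjunctive_add_eq_xor by metis
    then show ?thesis using True N by simp
  next
    case False
    define y' where "y' = y - 2^(n-1)"
    have y': "y' < 2^(n-1)" "y = 2^(n-1) + y'" using False assms(2) N by (auto simp: y'_def)
    have "y = xor (2^(n-1)) y'" using y' and_pow_small disjunctive_add_eq_xor by metis
    then have "xor (2^(n-1)) y = y'" by (simp add: xor.assoc[symmetric])
    moreover have "(y + 2^(n-1)) mod 2^n = y'" using y' N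
      by (metis add.assoc add.commute mod_add_self2 mod_less less_le_trans le_add1 ) 
    ultimately show ?thesis by simp
  qed
qed


locale ctx =
  fixes m \<delta> n :: nat and gs :: "nat \<Rightarrow> nat \<Rightarrow> nat" and L :: "nat \<Rightarrow> nat"
  assumes m1: "m > 1" and d1: "\<delta> > 1" and nd: "n = m * \<delta>"
    and gsb: "\<forall>j<\<delta>. bij_betw (gs j) {..<2 ^ m} {..<2 ^ m}"
    and lin: "inv_linear n L"
    and ntp: "non_type_preserving m \<delta> L"
begin

definition S where "S = parallel_sbox m \<delta> gs"
definition rho where "rho = L \<circ> S"

lemma gs_lt: "j < \<delta> \<Longrightarrow> y < 2^m \<Longrightarrow> gs j y < 2^m"
  using gsb bij_betwE by blast

lemma S_lt: "S x < 2^n"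
proof -
  have "(\<Sum>i<\<delta>. gs i (brick m i x) * 2^(m*i)) < 2^(m*\<delta>)"
    by (intro sum_bound) (simp add: gs_lt brick_lt)
  then show ?thesis by (simp add: S_def parallel_sbox_def nd)
qed

lemma brick_S: "j < \<delta> \<Longrightarrow> brick m j (S x) = gs j (brick m j x)"
  unfolding S_def parallel_sbox_def by (intro brick_sum) (simp_all add: gs_lt brick_lt)

lemma gs_inj: "j < \<delta> \<Longrightarrow> inj_on (gs j) {..<2^m}"
  using gsb bij_betw_def by blast

lemma S_inj: "inj_on S {..<2^n}"
proof (rule inj_onI)
  fix x y assume x: "x \<in> {..<2^n}" and y: "y \<in> {..<2^n}" and e: "S x = S y"
  have b: "brick m j x = brick m j y" if "j < \<delta>" for j
  proof -
    have "gs j (brick m j x) = gs j (brick m j y)" using e brick_S that by metis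
    then show ?thesis using gs_inj[OF that] brick_lt by (meson inj_onD lessThan_iff)
  qed
  have "x = (\<Sum>j<\<delta>. brick m j x * 2^(m*j))" using x nd recon by simp
  also have "\<dots> = (\<Sum>j<\<delta>. brick m j y * 2^(m*j))" using b by simp
  also have "\<dots> = y" using y nd recon[of y m \<delta>] by simp
  finally show "x = y" .
qed

lemma S_bij: "bij_betw S {..<2^n} {..<2^n}"
proof -
  have "S ` {..<2^n} \<subseteq> {..<2^n}" using S_lt by auto
  then have "S ` {..<2^n} = {..<2^n}" using S_inj by (simp add: endo_inj_surj)
  then show ?thesis using S_inj by (simp add: bij_betw_def)
qed

lemma L_bij: "bij_betw L {..<2^n} {..<2^n}" using lin by (simp add: inv_linear_def)

lemma rho_bij: "bij_betw rho {..<2^n} {..<2^n}"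
  unfolding rho_def using S_bij L_bij bij_betw_trans by blast

lemma rho_lt: "x < 2^n \<Longrightarrow> rho x < 2^n"
  using rho_bij bij_betwE by blast

lemma rho_surj: "y < 2^n \<Longrightarrow> \<exists>x<2^n. rho x = y"
  using rho_bij unfolding bij_betw_def by (metis imageE lessThan_iff)

lemma rho_inj: "x < 2^n \<Longrightarrow> y < 2^n \<Longrightarrow> rho x = rho y \<Longrightarrow> x = y"
  using rho_bij unfolding bij_betw_def by (meson inj_onD lessThan_iff)

lemma type_S:
  assumes "D \<subseteq> {..<2^n}" "j < \<delta>"
  shows "brick_type m (S ` D) j = brick_type m D j"
proof -
  have "brick m j ` S ` D = gs j ` brick m j ` D"
    using brick_S[OF assms(2)] by (auto simp: image_image)
  moreover have "inj_on (gs j) (brick m j ` D)"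
    using gs_inj[OF assms(2)] by (rule inj_on_subset) (auto simp: brick_lt)
  ultimately have "card (brick m j ` S ` D) = card (brick m j ` D)" by (simp add: card_image)
  then show ?thesis by (simp add: brick_type_def)
qed

end

definition cls :: "nat \<Rightarrow> nat \<Rightarrow> nat \<Rightarrow> nat set" where
  "cls n k c = {x. x < 2^n \<and> x mod 2^k = c}"

lemma pow_dvd_mod: "k \<le> a \<Longrightarrow> (x::nat) mod 2^a mod 2^k = x mod 2^k"
  by (intro mod_mod_cancel) (simp add: le_imp_power_dvd)

lemma cls_white:
  assumes "m*(j+1) \<le> k" "k \<le> n" "c < 2^k"
  shows "brick m j ` cls n k c = {brick m j c}"
proof -
  have cin: "c \<in> cls n k c" using assms
    by (simp add: cls_def) (meson less_le_trans one_less_numeral_iff power_increasing_iff semiring_norm(76) order.refl power_increasing zero_less_numeral)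
  have "brick m j x = brick m j c" if "x \<in> cls n k c" for x
  proof -
    have "brick m j x = (x mod 2^(m*j+m)) div 2^(m*j)" by (simp add: brick_def divmod_pow)
    also have "x mod 2^(m*j+m) = c mod 2^(m*j+m)"
      using that assms pow_dvd_mod[of "m*j+m" k x] by (simp add: cls_def algebra_simps)
    also have "(c mod 2^(m*j+m)) div 2^(m*j) = brick m j c" by (simp add: brick_def divmod_pow)
    finally show ?thesis .
  qed
  then show ?thesis using cin by blast
qed

lemma cls_black:
  assumes "k \<le> m*j" "j < d" "c < 2^k"
  shows "brick m j ` cls (m*d) k c = {..<2^m}"
proof
  show "brick m j ` cls (m*d) k c \<subseteq> {..<2^m}" by (auto simp: brick_lt)
  show "{..<2^m} \<subseteq> brick m j ` cls (m*d) k c"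
  proof
    fix y assume "y \<in> {..<(2::nat)^m}"
    then have y: "y < 2^m" by simp
    define x where "x = c + y * 2^(m*j)"
    have c2: "c < 2^(m*j)" using assms(1,3) by (meson less_le_trans power_increasing one_le_numeral)
    have "x < 2^(m*j) + y * 2^(m*j)" using c2 by (simp add: x_def)
    also have "\<dots> = (y+1) * 2^(m*j)" by simp
    also have "\<dots> \<le> 2^m * 2^(m*j)" using y by (intro mult_le_mono1) simp
    also have "\<dots> = 2^(m*(j+1))" by (simp add: power_add algebra_simps)
    also have "\<dots> \<le> 2^(m*d)"
    proof -
      have "m*(j+1) \<le> m*d" using assms(2) by (intro mult_le_mono2) simp
      then show ?thesis by (intro power_increasing) simp_all
    qed
    finally have xl: "x < 2^(m*d)" .
    have "(2::nat)^k dvd 2^(m*j)" using assms(1) by (simp add: le_imp_power_dvd)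
    then obtain t where t: "(2::nat)^(m*j) = 2^k * t" by (auto elim: dvdE)
    have xx: "x = c + 2^k * (y*t)" unfolding x_def t
      by (rule arg_cong[where f="(+) c"]) (rule mult.left_commute)
    have "x mod 2^k = c mod 2^k" unfolding xx by (rule mod_mult_self2)
    then have xm: "x mod 2^k = c" using assms(3) by simp
    have "x div 2^(m*j) = y" using c2 by (simp add: x_def)
    then have "brick m j x = y" using y by (simp add: brick_def)
    then show "y \<in> brick m j ` cls (m*d) k c" using xl xm by (auto simp: cls_def)
  qed
qed

lemma cls_ruled:
  assumes "m*j < k" "k < m*(j+1)" "j < d" "c < 2^k" "m > 1"
  shows "card (brick m j ` cls (m*d) k c) \<noteq> 1 \<and> card (brick m j ` cls (m*d) k c) \<noteq> 2^m"
proof -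
  let ?I = "brick m j ` cls (m*d) k c"
  have kle: "k \<le> m*j + (m-1)" using assms(2) by (simp add: algebra_simps)
  have c2: "c < 2^(m*j + (m-1))" using assms(4) kle by (meson less_le_trans power_increasing one_le_numeral)
  have md: "m*j + m \<le> m*d" using assms(3) by (metis Suc_leI add.commute mult_Suc_right mult_le_mono2)
  have pm: "(2::nat)^(m*j+m) = 2 * 2^(m*j + (m-1))" using assms(5)
    by (metis Suc_diff_1 add_Suc_right less_trans power_Suc zero_less_one)
  have ltd: "(2::nat)^(m*j+m) \<le> 2^(m*d)" using md by (intro power_increasing) simp_all
  define c' where "c' = c + 2^(m*j + (m-1))"
  have cl: "c < 2^(m*d)" using c2 pm ltd by linarith
  have c'l: "c' < 2^(m*d)" using c2 pm ltd by (simp add: c'_def)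
  have "(2::nat)^k dvd 2^(m*j + (m-1))" using kle by (simp add: le_imp_power_dvd)
  then obtain t where t: "(2::nat)^(m*j + (m-1)) = 2^k * t" by (auto elim: dvdE)
  have "c' mod 2^k = c mod 2^k" unfolding c'_def t by (rule mod_mult_self2)
  then have c'm: "c' mod 2^k = c" using assms(4) by simp
  have cin: "c \<in> cls (m*d) k c" "c' \<in> cls (m*d) k c" using cl c'l c'm assms(4) by (auto simp: cls_def)
  define q where "q = c div 2^(m*j)"
  have q: "q < 2^(m-1)" using c2 unfolding q_def
    by (simp add: less_mult_imp_div_less power_add mult.commute)
  have pm2: "(2::nat)^m = 2 * 2^(m-1)" using assms(5) by (metis Suc_diff_1 less_trans power_Suc zero_less_one)
  have "brick m j c = q" using q pm2 by (simp add: brick_def q_def)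
  moreover have "c' div 2^(m*j) = q + 2^(m-1)"
    unfolding c'_def q_def by (simp add: power_add)
  then have "brick m j c' = q + 2^(m-1)" using q pm2 by (simp add: brick_def)
  ultimately have "brick m j c \<noteq> brick m j c'" by simp
  have two: "card ?I \<noteq> 1"
  proof
    assume "card ?I = 1"
    then obtain z where "?I = {z}" by (rule card_1_singletonE)
    then have "brick m j c = z" "brick m j c' = z" using cin by blast+
    then show False using \<open>brick m j c \<noteq> brick m j c'\<close> by simp
  qed
  define p where "p = c mod 2^(m*j+1) div 2^(m*j)"
  have par: "brick m j x mod 2 = p" if "x \<in> cls (m*d) k c" for x
  proof -
    have "brick m j x mod 2 = x div 2^(m*j) mod 2^1"
      unfolding brick_def using assms(5) by (simp add: mod_mod_cancel le_imp_power_dvd)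
    also have "\<dots> = x mod 2^(m*j+1) div 2^(m*j)" by (rule divmod_pow)
    also have "x mod 2^(m*j+1) = c mod 2^(m*j+1)"
      using that assms(1) pow_dvd_mod[of "m*j+1" k x] by (simp add: cls_def)
    finally show ?thesis by (simp add: p_def)
  qed
  have "p = brick m j c mod 2" using par[OF cin(1)] by simp
  then have "p < 2" by simp
  define y0 where "y0 = 1 - p"
  have "1 < (2::nat)^m" by (rule one_less_power) (use assms(5) in auto)
  then have "y0 < 2^m" unfolding y0_def by linarith
  moreover have "y0 \<notin> ?I"
  proof
    assume "y0 \<in> ?I"
    then obtain x where "x \<in> cls (m*d) k c" "y0 = brick m j x" by auto
    then have "y0 mod 2 = p" using par by simp
    then show False using \<open>p < 2\<close> unfolding y0_def
      by (cases "p = 0") auto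
  qed
  moreover have "?I \<subseteq> {..<2^m}" by (auto simp: brick_lt)
  ultimately have "?I \<subset> {..<2^m}" by blast
  then have "card ?I < card {..<(2::nat)^m}" by (intro psubset_card_mono) simp_all
  then have "card ?I < 2^m" by simp
  then show ?thesis using two by simp
qed

lemma cls_type:
  assumes "m > 1" "0 < k" "k < m*d" "c < 2^k" "j < d"
  shows "brick_type m (cls (m*d) k c) j = std_type (k div m) (if k mod m = 0 then 0 else 1) j"
proof -
  consider "m*(j+1) \<le> k" | "k \<le> m*j" | "m*j < k \<and> k < m*(j+1)" by linarith
  then show ?thesis
  proof cases
    case 1
    then have "brick m j ` cls (m*d) k c = {brick m j c}" using assms by (intro cls_white) simp_all
    moreover have "j < k div m"
    proof -
      have "(m*(j+1)) div m \<le> k div m" using 1 by (rule div_le_mono)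
      then show ?thesis using assms(1) by simp
    qed
    ultimately show ?thesis by (simp add: brick_type_def std_type_def)
  next
    case 2
    then have "brick m j ` cls (m*d) k c = {..<2^m}" using assms by (intro cls_black) simp_all
    moreover have "(2::nat)^m \<noteq> 1" using assms(1) by simp
    moreover have "\<not> j < k div m + (if k mod m = 0 then 0 else 1)"
    proof (cases "k mod m = 0")
      case True
      have "k div m \<le> (m*j) div m" using 2 by (rule div_le_mono)
      then have "k div m \<le> j" using assms(1) by simp
      then show ?thesis using True by simp
    next
      case False
      then have "k \<noteq> m*j" by auto
      then have "k < m*j" using 2 by simp
      then have "k div m < j" using assms(1)
        by (simp add: less_mult_imp_div_less mult.commute)
      then show ?thesis by simp
    qed
    ultimately show ?thesis by (simp add: brick_type_def std_type_def)
  next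
    case 3
    then have c: "card (brick m j ` cls (m*d) k c) \<noteq> 1 \<and> card (brick m j ` cls (m*d) k c) \<noteq> 2^m"
      using assms by (intro cls_ruled) simp_all
    have "k div m = j" using 3 by (intro div_nat_eqI) simp_all
    moreover have "k mod m \<noteq> 0"
    proof
      assume "k mod m = 0"
      then have "k = m * (k div m)" by (metis mult_div_mod_eq add_0_right)
      then show False using 3 \<open>k div m = j\<close> by simp
    qed
    ultimately show ?thesis using c by (simp add: brick_type_def std_type_def)
  qed
qed


lemma card_cls:
  assumes "k \<le> n" "c < 2^k"
  shows "card (cls n k c) = card (cls n k 0)"
proof -
  have "bij_betw (\<lambda>x. x + c) (cls n k 0) (cls n k c)"
  proof (rule bij_betw_imageI)
    show "inj_on (\<lambda>x. x + c) (cls n k 0)" by (simp add: inj_on_def)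
    show "(\<lambda>x. x + c) ` cls n k 0 = cls n k c"
    proof
      show "(\<lambda>x. x + c) ` cls n k 0 \<subseteq> cls n k c"
      proof
        fix y assume "y \<in> (\<lambda>x. x + c) ` cls n k 0"
        then obtain x where xin: "x \<in> cls n k 0" and y: "y = x + c" by blast
        have x: "x < 2^n" "x mod 2^k = 0" using xin unfolding cls_def by blast+
        obtain t where t: "x = 2^k * t" using x(2) by auto
        have nn: "(2::nat)^n = 2^k * 2^(n-k)" using assms(1) by (simp add: power_add[symmetric])
        have "t < 2^(n-k)" using x(1) t nn by simp
        then have "2^k * (t+1) \<le> 2^k * 2^(n-k)" by (intro mult_le_mono2) simp
        then have "x + 2^k \<le> 2^n" using t nn by simp
        then have "y < 2^n" using y assms(2) by simp
        moreover have "y mod 2^k = c" using t y assms(2) by simp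
        ultimately show "y \<in> cls n k c" by (simp add: cls_def)
      qed
      show "cls n k c \<subseteq> (\<lambda>x. x + c) ` cls n k 0"
      proof
        fix y assume "y \<in> cls n k c"
        then have y: "y < 2^n" "y mod 2^k = c" by (auto simp: cls_def)
        have "y - c = 2^k * (y div 2^k)" using y(2) by (metis minus_mod_eq_mult_div)
        then have "y - c \<in> cls n k 0" using y by (simp add: cls_def)
        moreover have "y = (y - c) + c" using y(2) by (metis le_add_diff_inverse2 mod_less_eq_dividend)
        ultimately show "y \<in> (\<lambda>x. x + c) ` cls n k 0" by blast
      qed
    qed
  qed
  then show ?thesis by (metis bij_betw_same_card)
qed

lemma two_w: "(w::nat) < 2^n \<Longrightarrow> n \<ge> 1 \<Longrightarrow> (2*w) mod 2^n = 0 \<Longrightarrow> w = 0 \<or> w = 2^(n-1)"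
proof -
  assume a: "w < 2^n" "n \<ge> 1" "(2*w) mod 2^n = 0"
  have N: "(2::nat)^n = 2 * 2^(n-1)" using a(2) by (metis Suc_diff_1 less_le_trans power_Suc zero_less_one)
  obtain t where t: "2*w = 2^n * t" using a(3) by auto
  have "2 * w < 2 * (2::nat)^n" using a(1) by simp
  then have "2^n * t < 2^n * (2::nat)" using t by linarith
  then have "t < 2" by simp
  then have "t = 0 \<or> t = 1" by auto
  then show ?thesis using t N by auto
qed

lemma pow2_dvd: "(g::nat) dvd 2^n \<Longrightarrow> \<exists>k\<le>n. g = 2^k"
proof (induction n arbitrary: g)
  case 0 then show ?case by simp
next
  case (Suc n)
  show ?case
  proof (cases "even g")
    case True
    then obtain g' where g: "g = 2*g'" by auto
    then have "g' dvd 2^n" using Suc.prems by simp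
    then obtain k where "k \<le> n" "g' = 2^k" using Suc.IH by blast
    then show ?thesis using g by (intro exI[of _ "Suc k"]) simp
  next
    case False
    then have "coprime g 2" by simp
    then have "g dvd 2^n" using Suc.prems by (simp add: coprime_dvd_mult_right_iff)
    then show ?thesis using Suc.IH by force
  qed
qed


context ctx begin

definition F where "F = feistel rho"
definition Finv where "Finv y = (xor (snd y) (rho (fst y)), fst y)"
definition Gam where "Gam = Gamma_inf n rho"
definition hh where "hh = (2::nat)^(n-1)"
definition sm where "sm a b = (a + (2^n - b)) mod (2::nat)^n"

lemma n_ge: "n \<ge> 1" using m1 d1 nd by (simp add: Suc_le_eq)

lemma hh_lt: "hh < 2^n" "0 < hh"
  using n_ge by (simp_all add: hh_def)

lemma NN: "(2::nat)^n = hh + hh"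
proof -
  obtain n' where "n = Suc n'" using n_ge by (cases n) auto
  then show ?thesis unfolding hh_def by simp
qed

lemma V_iff: "x \<in> Vspace n \<longleftrightarrow> fst x < 2^n \<and> snd x < 2^n"
  by (cases x) (simp add: Vspace_def)

lemma F_eq: "F x = (snd x, xor (fst x) (rho (snd x)))"
  by (simp add: F_def feistel_def)

lemma F_V: "x \<in> Vspace n \<Longrightarrow> F x \<in> Vspace n"
  by (simp add: V_iff F_eq xor_lt rho_lt)

lemma Finv_V: "x \<in> Vspace n \<Longrightarrow> Finv x \<in> Vspace n"
  by (simp add: V_iff Finv_def xor_lt rho_lt)

lemma xor_cancel: "xor (xor a b) b = (a::nat)"
  by (simp add: xor.assoc)

lemma Finv_F: "Finv (F x) = x"
  by (cases x) (simp add: Finv_def F_eq xor_cancel)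

lemma F_Finv: "F (Finv x) = x"
  by (cases x) (simp add: Finv_def F_eq xor_cancel)

lemma sig_V: "sigma n k x \<in> Vspace n"
  by (simp add: V_iff sigma_def)

lemma sig0: "x \<in> Vspace n \<Longrightarrow> sigma n (0,0) x = x"
  by (cases x) (simp add: V_iff sigma_def)

lemma gen_in: "k \<in> Vspace n \<Longrightarrow> h \<in> Vspace n \<Longrightarrow>
    restrict (sigma n h \<circ> F \<circ> sigma n k) (Vspace n) \<in> Gam"
  unfolding Gam_def Gamma_inf_def F_def by (rule generate.incl) blast

lemma zV: "(0,0) \<in> Vspace n" by (simp add: V_iff)

lemma F_restr: "restrict F (Vspace n) = restrict (sigma n (0,0) \<circ> F \<circ> sigma n (0,0)) (Vspace n)"
  by (rule restrict_ext) (simp add: sig0 F_V)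

lemma F_in: "restrict F (Vspace n) \<in> Gam"
  unfolding F_restr by (rule gen_in[OF zV zV])

lemma F_bij: "bij_betw F (Vspace n) (Vspace n)"
  by (rule bij_betw_byWitness[where f'=Finv]) (auto simp: Finv_F F_Finv F_V Finv_V)

lemma F_Bij: "restrict F (Vspace n) \<in> Bij (Vspace n)"
proof -
  have "bij_betw (restrict F (Vspace n)) (Vspace n) (Vspace n) = bij_betw F (Vspace n) (Vspace n)"
    by (rule bij_betw_cong) simp
  then show ?thesis unfolding Bij_def using F_bij by simp
qed

lemma Finv_in: "restrict Finv (Vspace n) \<in> Gam"
proof -
  have "inv\<^bsub>BijGroup (Vspace n)\<^esub> (restrict F (Vspace n)) \<in> Gam"
  proof -
    have "restrict F (Vspace n) \<in> {restrict (sigma n h \<circ> feistel rho \<circ> sigma n k) (Vspace n) | k h. k \<in> Vspace n \<and> h \<in> Vspace n}"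
      unfolding F_restr using zV by (auto simp: F_def)
    then show ?thesis unfolding Gam_def Gamma_inf_def by (rule generate.inv)
  qed
  moreover have "inv\<^bsub>BijGroup (Vspace n)\<^esub> (restrict F (Vspace n)) = restrict Finv (Vspace n)"
  proof -
    have inj: "inj_on (restrict F (Vspace n)) (Vspace n)"
      using F_Bij by (simp add: Bij_def bij_betw_def)
    have "inv_into (Vspace n) (restrict F (Vspace n)) y = Finv y" if "y \<in> Vspace n" for y
      by (rule inv_into_f_eq[OF inj]) (simp_all add: that Finv_V F_Finv)
    then show ?thesis by (simp add: inv_BijGroup[OF F_Bij] cong: restrict_cong)
  qed
  ultimately show ?thesis by simp
qed

end


context ctx begin

lemma sm_add: "a < 2^n \<Longrightarrow> b < 2^n \<Longrightarrow> (sm a b + b) mod 2^n = a"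
proof -
  assume a: "a < 2^n" and b: "b < 2^n"
  have "(sm a b + b) mod 2^n = (a + (2^n - b) + b) mod 2^n" by (simp add: sm_def mod_add_left_eq)
  also have "a + (2^n - b) + b = a + 2^n" using b by simp
  finally show ?thesis using a by simp
qed

lemma sm_self: "b < 2^n \<Longrightarrow> sm b b = 0" by (simp add: sm_def)

lemma sm_zero: "a < 2^n \<Longrightarrow> sm a 0 = a" by (simp add: sm_def)

lemma sm_le: "b \<le> a \<Longrightarrow> a < 2^n \<Longrightarrow> sm a b = a - b"
proof -
  assume ba: "b \<le> a" "a < 2^n"
  have "sm a b = ((a - b) + 2^n) mod 2^n" unfolding sm_def
    by (rule arg_cong[where f="\<lambda>z. z mod 2^n"]) (use ba in simp)
  also have "\<dots> = (a - b) mod 2^n" by (rule mod_add_self2)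
  also have "\<dots> = a - b" using ba by simp
  finally show ?thesis .
qed

end


locale blk = ctx +
  fixes P :: "(nat \<times> nat) set set"
  assumes part: "partition_on (Vspace n) P"
    and pinv: "\<forall>g\<in>Gam. \<forall>B\<in>P. g ` B \<in> P"
begin

definition RR where "RR x y \<longleftrightarrow> (\<exists>B\<in>P. x \<in> B \<and> y \<in> B)"

lemma R_V: "RR x y \<Longrightarrow> x \<in> Vspace n \<and> y \<in> Vspace n"
  using part unfolding RR_def partition_on_def by blast

lemma R_refl: "x \<in> Vspace n \<Longrightarrow> RR x x"
  using part unfolding RR_def partition_on_def by blast

lemma R_sym: "RR x y \<Longrightarrow> RR y x"
  unfolding RR_def by blast

lemma R_trans: "RR x y \<Longrightarrow> RR y z \<Longrightarrow> RR x z"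
proof -
  assume "RR x y" "RR y z"
  then obtain B B' where B: "B \<in> P" "x \<in> B" "y \<in> B" and B': "B' \<in> P" "y \<in> B'" "z \<in> B'"
    unfolding RR_def by blast
  have "B = B'"
  proof (rule ccontr)
    assume "B \<noteq> B'"
    then have "disjnt B B'" using part B(1) B'(1) unfolding partition_on_def pairwise_def by blast
    then show False using B(3) B'(2) unfolding disjnt_def by blast
  qed
  then show "RR x z" using B B' unfolding RR_def by blast
qed

lemma R_g: "g \<in> Gam \<Longrightarrow> RR x y \<Longrightarrow> RR (g x) (g y)"
  using pinv unfolding RR_def by blast

lemma R_F: "RR x y \<Longrightarrow> RR (F x) (F y)"
  using R_g[OF F_in, of x y] R_V[of x y] by simp

lemma R_Finv: "RR x y \<Longrightarrow> RR (Finv x) (Finv y)"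
  using R_g[OF Finv_in, of x y] R_V[of x y] by simp

lemma R_sig: "k \<in> Vspace n \<Longrightarrow> RR x y \<Longrightarrow> RR (sigma n k x) (sigma n k y)"
proof -
  assume k: "k \<in> Vspace n" and r: "RR x y"
  have "RR (restrict (sigma n (0,0) \<circ> F \<circ> sigma n k) (Vspace n) x)
           (restrict (sigma n (0,0) \<circ> F \<circ> sigma n k) (Vspace n) y)"
    by (rule R_g[OF gen_in[OF k zV] r])
  then have "RR (F (sigma n k x)) (F (sigma n k y))"
    using R_V[OF r] by (simp add: sig0 F_V sig_V)
  then have "RR (Finv (F (sigma n k x))) (Finv (F (sigma n k y)))" by (rule R_Finv)
  then show ?thesis by (simp add: Finv_F)
qed

abbreviation U where "U u \<equiv> RR (0,0) u"

lemma tr: "U u \<Longrightarrow> x \<in> Vspace n \<Longrightarrow> RR x ((fst u + fst x) mod 2^n, (snd u + snd x) mod 2^n)"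
proof -
  assume u: "U u" and x: "x \<in> Vspace n"
  have "RR (sigma n x (0,0)) (sigma n x u)" by (rule R_sig[OF x u])
  moreover have "sigma n x (0,0) = x" using x by (cases x) (simp add: sigma_def V_iff)
  ultimately show ?thesis by (simp add: sigma_def)
qed

lemma sm_lt: "sm a b < 2^n" by (simp add: sm_def)

lemma add_sm: "(b::nat) < 2^n \<Longrightarrow> (b + (2^n - b) mod 2^n) mod 2^n = 0"
  by (cases "b = 0") simp_all

lemma diff: "RR x y \<Longrightarrow> U (sm (fst y) (fst x), sm (snd y) (snd x))"
proof -
  assume r: "RR x y"
  have x: "x \<in> Vspace n" and y: "y \<in> Vspace n" using R_V[OF r] by auto
  define k where "k = ((2^n - fst x) mod 2^n, (2^n - snd x) mod 2^n)"
  have k: "k \<in> Vspace n" by (simp add: k_def V_iff)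
  have "RR (sigma n k x) (sigma n k y)" by (rule R_sig[OF k r])
  moreover have "sigma n k x = (0,0)" using x
    by (simp add: k_def sigma_def V_iff add_sm)
  moreover have "sigma n k y = (sm (fst y) (fst x), sm (snd y) (snd x))"
    by (simp add: k_def sigma_def sm_def mod_add_right_eq)
  ultimately show ?thesis by simp
qed

lemma U_mult: "U u \<Longrightarrow> U ((j * fst u) mod 2^n, (j * snd u) mod 2^n)"
proof (induction j)
  case 0 then show ?case using R_refl zV by simp
next
  case (Suc j)
  have "RR ((j * fst u) mod 2^n, (j * snd u) mod 2^n)
          ((fst u + (j * fst u) mod 2^n) mod 2^n, (snd u + (j * snd u) mod 2^n) mod 2^n)"
    using tr[OF Suc.prems, of "((j * fst u) mod 2^n, (j * snd u) mod 2^n)"] by (simp add: V_iff)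
  moreover have "(fst u + (j * fst u) mod 2^n) mod 2^n = (Suc j * fst u) mod 2^n"
    by (simp add: mod_add_right_eq)
  moreover have "(snd u + (j * snd u) mod 2^n) mod 2^n = (Suc j * snd u) mod 2^n"
    by (simp add: mod_add_right_eq)
  ultimately show ?case using Suc R_trans by metis
qed

lemma ord2:
  assumes u: "U u" and nz: "u \<noteq> (0,0)"
  shows "\<exists>w. U w \<and> w \<noteq> (0,0) \<and> (fst w = 0 \<or> fst w = hh) \<and> (snd w = 0 \<or> snd w = hh)
             \<and> (fst u = 0 \<longrightarrow> fst w = 0)"
proof -
  have uV: "fst u < 2^n" "snd u < 2^n" using R_V[OF u] by (auto simp: V_iff)
  define Q where "Q i \<longleftrightarrow> (2^i * fst u) mod 2^n = 0 \<and> (2^i * snd u) mod (2::nat)^n = 0" for i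
  have Qn: "Q n" by (simp add: Q_def)
  define i0 where "i0 = (LEAST i. Q i)"
  have Qi0: "Q i0" unfolding i0_def using Qn by (rule LeastI)
  have "i0 \<noteq> 0"
  proof
    assume "i0 = 0"
    then have "fst u = 0" "snd u = 0" using Qi0 uV by (auto simp: Q_def)
    then show False using nz by (cases u) simp
  qed
  then obtain i1 where i1: "i0 = Suc i1" by (cases i0) auto
  have nQ: "\<not> Q i1" unfolding i0_def[symmetric]
    using not_less_Least[of i1 Q] i1 i0_def by simp
  define w where "w = ((2^i1 * fst u) mod 2^n, (2^i1 * snd u) mod (2::nat)^n)"
  have Uw: "U w" unfolding w_def using U_mult[OF u] .
  have wnz: "w \<noteq> (0,0)" using nQ by (simp add: w_def Q_def)
  have two: "c = 0 \<or> c = hh" if "(2 * c) mod 2^n = 0" "c < 2^n" for c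
  proof -
    have "c = 0 \<or> c = 2^(n-1)" by (rule two_w) (use that n_ge in auto)
    then show ?thesis by (simp add: hh_def)
  qed
  have "(2 * ((2^i1 * fst u) mod 2^n)) mod (2::nat)^n = (2^i0 * fst u) mod 2^n"
    by (simp add: mod_mult_right_eq i1 mult.assoc)
  then have w1: "fst w = 0 \<or> fst w = hh" using Qi0 two by (simp add: w_def Q_def)
  have "(2 * ((2^i1 * snd u) mod 2^n)) mod (2::nat)^n = (2^i0 * snd u) mod 2^n"
    by (simp add: mod_mult_right_eq i1 mult.assoc)
  then have w2: "snd w = 0 \<or> snd w = hh" using Qi0 two by (simp add: w_def Q_def)
  have w3: "fst u = 0 \<longrightarrow> fst w = 0" unfolding w_def by simp
  show ?thesis by (intro exI[of _ w] conjI Uw wnz w1 w2 w3)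
qed

end


context ctx begin

lemma dvd_sm:
  assumes "k \<le> n" "a < 2^n" "b < 2^n"
  shows "(2::nat)^k dvd sm a b \<longleftrightarrow> a mod 2^k = b mod 2^k"
proof -
  have kd: "(2::nat)^k dvd 2^n" using assms(1) by (simp add: le_imp_power_dvd)
  have "sm a b mod 2^k = (a + (2^n - b)) mod 2^k"
    unfolding sm_def using kd by (rule mod_mod_cancel)
  also have "a + (2^n - b) = (a + 2^n) - b" using assms(3) by simp
  finally have e: "sm a b mod 2^k = ((a + 2^n) - b) mod 2^k" .
  have "(2::nat)^k dvd sm a b \<longleftrightarrow> 2^k dvd (a + 2^n) - b"
    using e by (simp add: dvd_eq_mod_eq_0)
  also have "\<dots> \<longleftrightarrow> (a + 2^n) mod 2^k = b mod 2^k"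
    using assms(3) by (intro mod_eq_dvd_iff_nat[symmetric]) simp
  also have "(a + 2^n) mod 2^k = a mod 2^k" using kd by (auto elim!: dvdE)
  finally show ?thesis .
qed

lemma no_class_pres:
  assumes k0: "0 < k" and kn: "k < n"
    and pres: "\<forall>x y. x < 2^n \<longrightarrow> y < 2^n \<longrightarrow> x mod 2^k = y mod 2^k \<longrightarrow> rho x mod 2^k = rho y mod 2^k"
  shows False
proof -
  define D0 where "D0 = cls n k 0"
  define c' where "c' = rho 0 mod 2^k"
  have c'lt: "c' < 2^k" by (simp add: c'_def)
  have D0sub: "D0 \<subseteq> {..<2^n}" by (auto simp: D0_def cls_def)
  have z: "0 \<in> D0" by (simp add: D0_def cls_def)
  have sub: "rho ` D0 \<subseteq> cls n k c'"
  proof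
    fix y assume "y \<in> rho ` D0"
    then obtain x where x: "x \<in> D0" "y = rho x" by blast
    have xx: "x < 2^n" "x mod 2^k = 0 mod 2^k" using x(1) by (auto simp: D0_def cls_def)
    have "rho x mod 2^k = rho 0 mod 2^k"
      by (rule pres[rule_format]) (use xx in simp_all)
    then show "y \<in> cls n k c'" using x rho_lt \<open>x < 2^n\<close> by (simp add: cls_def c'_def)
  qed
  have "inj_on rho D0" using rho_bij D0sub unfolding bij_betw_def by (meson inj_on_subset)
  then have "card (rho ` D0) = card D0" by (rule card_image)
  also have "\<dots> = card (cls n k c')" unfolding D0_def
    using card_cls[of k n c'] kn c'lt by simp
  finally have "card (rho ` D0) = card (cls n k c')" .
  moreover have "finite (cls n k c')"
    by (rule finite_subset[of _ "{..<2^n}"]) (auto simp: cls_def)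
  ultimately have img: "rho ` D0 = cls n k c'" using sub by (simp add: card_subset_eq)
  define a where "a = k div m"
  define b where "b = (if k mod m = 0 then 0 else (1::nat))"
  define c where "c = \<delta> - a - b"
  have m0: "m > 1" using m1 .
  have knd: "k < m * \<delta>" using kn nd by simp
  have tD: "brick_type m (cls n k c0) j = std_type a b j" if "j < \<delta>" "c0 < 2^k" for j c0
    unfolding nd a_def b_def by (rule cls_type) (use m0 k0 knd that in simp_all)
  have "a < \<delta>" unfolding a_def using knd by (simp add: less_mult_imp_div_less mult.commute)
  then have abc: "a + b + c = \<delta>" "b \<le> 1" "a \<noteq> \<delta>" by (auto simp: b_def c_def)
  have "a + b \<noteq> 0"
  proof
    assume "a + b = 0"
    then have "k div m = 0" "k mod m = 0" by (auto simp: a_def b_def split: if_splits)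
    then have "k = 0" by (metis mult_div_mod_eq mult_0_right add_0_right)
    then show False using k0 by simp
  qed
  then have "c \<noteq> \<delta>" using abc(1) by linarith
  have SD: "S ` D0 \<subseteq> {..<2 ^ (m * \<delta>)}" using S_lt nd by auto
  have SDne: "S ` D0 \<noteq> {}" using z by blast
  have tS: "\<forall>j<\<delta>. brick_type m (S ` D0) j = std_type a b j"
    using type_S[OF D0sub] tD[of _ 0] by (simp add: D0_def)
  obtain j where j: "j < \<delta>" "brick_type m (L ` S ` D0) j \<noteq> brick_type m (S ` D0) j"
    using ntp unfolding non_type_preserving_def
    using SD SDne abc \<open>c \<noteq> \<delta>\<close> tS by blast
  have "L ` S ` D0 = rho ` D0" by (simp add: rho_def image_comp)
  then have "brick_type m (L ` S ` D0) j = std_type a b j" using img tD[OF j(1) c'lt] by simp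
  then show False using j tS by simp
qed

end

context blk begin

lemma xor0: "xor 0 a = (a::nat)" "xor a 0 = (a::nat)" by simp_all

lemma U_0h:
  assumes u: "U u" and nz: "u \<noteq> (0,0)"
  shows "U (0, hh)"
proof -
  obtain x0 where x0: "x0 < 2^n" "rho x0 = 0" using rho_surj[of 0] by auto
  have hl: "hh < 2^n" using hh_lt by simp
  have key: "U (0, hh)" if w: "U w" "w \<noteq> (0,0)" "fst w = 0 \<or> fst w = hh" "snd w = 0 \<or> snd w = hh"
    and c: "fst w \<noteq> 0 \<or> snd w = hh" for w
  proof -
    consider "w = (0,hh)" | "w = (hh,0)" | "w = (hh,hh)"
      using w(2-4) c by (cases w) auto
    then show ?thesis
    proof cases
      case 1 then show ?thesis using w by simp
    next
      case 2
      have "RR (0,x0) ((fst w + 0) mod 2^n, (snd w + x0) mod 2^n)"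
        using tr[OF w(1), of "(0,x0)"] x0 by (simp add: V_iff)
      then have "RR (0,x0) (hh, x0)" using 2 x0 hl by simp
      then have "RR (F (0,x0)) (F (hh,x0))" by (rule R_F)
      then have "RR (x0,0) (x0,hh)" using x0 by (simp add: F_eq)
      then have "U (sm x0 x0, sm hh 0)" using diff by fastforce
      then show ?thesis using x0 hl by (simp add: sm_self sm_zero)
    next
      case 3
      define x2 where "x2 = (hh + x0) mod 2^n"
      have x2l: "x2 < 2^n" by (simp add: x2_def)
      have "RR (0,x0) ((fst w + 0) mod 2^n, (snd w + x0) mod 2^n)"
        using tr[OF w(1), of "(0,x0)"] x0 by (simp add: V_iff)
      then have "RR (0,x0) (hh, x2)" using 3 hl by (simp add: x2_def)
      then have "RR (F (0,x0)) (F (hh,x2))" by (rule R_F)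
      then have r1: "RR (x0,0) (x2, xor hh (rho x2))" using x0 by (simp add: F_eq)
      have "RR (x0,0) ((fst w + x0) mod 2^n, (snd w + 0) mod 2^n)"
        using tr[OF w(1), of "(x0,0)"] x0 by (simp add: V_iff)
      then have r2: "RR (x0,0) (x2, hh)" using 3 hl by (simp add: x2_def)
      have "RR (x2, hh) (x2, xor hh (rho x2))" using r1 r2 R_sym R_trans by blast
      then have "U (sm x2 x2, sm (xor hh (rho x2)) hh)" using diff by fastforce
      moreover have "xor hh (rho x2) = (rho x2 + hh) mod 2^n"
        unfolding hh_def by (rule xor_h) (use n_ge rho_lt x2l in auto)
      moreover have "sm ((rho x2 + hh) mod 2^n) hh = rho x2"
      proof -
        have "sm ((rho x2 + hh) mod 2^n) hh = (rho x2 + hh + (2^n - hh)) mod 2^n"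
          by (simp add: sm_def mod_add_left_eq)
        also have "rho x2 + hh + (2^n - hh) = rho x2 + 2^n" using hl by simp
        finally show ?thesis using rho_lt[OF x2l] by simp
      qed
      ultimately have Ur: "U (0, rho x2)" using x2l by (simp add: sm_self)
      have "x2 = xor hh x0"
        unfolding x2_def hh_def using xor_h[of n x0] n_ge x0 by (simp add: add.commute)
      then have "x2 \<noteq> x0"
        using hh_lt(2) by (metis xor_cancel xor.left_neutral xor_self_eq less_irrefl)
      then have "rho x2 \<noteq> 0" using rho_inj x2l x0 by metis
      then obtain w' where w': "U w'" "w' \<noteq> (0,0)" "snd w' = 0 \<or> snd w' = hh" "fst w' = 0"
        using ord2[OF Ur] by auto
      then have "w' = (0,hh)" by (cases w') auto
      then show ?thesis using w' by simp
    qed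
  qed
  obtain w where w: "U w" "w \<noteq> (0,0)" "fst w = 0 \<or> fst w = hh" "snd w = 0 \<or> snd w = hh"
    using ord2[OF u nz] by blast
  show ?thesis
  proof (cases "fst w \<noteq> 0 \<or> snd w = hh")
    case True then show ?thesis using key w by blast
  next
    case False
    then have "w = (0,0)" using w by (cases w) auto
    then show ?thesis using w by simp
  qed
qed

end


context blk begin

definition K where "K b \<longleftrightarrow> b < 2^n \<and> U (0,b)"

lemma K_swap: "K b \<Longrightarrow> U (b,0)"
proof -
  assume Kb: "K b"
  obtain y1 where y1: "y1 < 2^n" "rho y1 = 0" using rho_surj[of 0] by auto
  have b: "b < 2^n" "U (0,b)" using Kb by (auto simp: K_def)
  have "RR (y1,0) ((0 + y1) mod 2^n, (b + 0) mod 2^n)"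
    using tr[OF b(2), of "(y1,0)"] y1 by (simp add: V_iff)
  then have "RR (y1,0) (y1,b)" using y1 b by simp
  then have "RR (Finv (y1,0)) (Finv (y1,b))" by (rule R_Finv)
  then have "RR (0,y1) (b,y1)" using y1 by (simp add: Finv_def)
  then have "U (sm b 0, sm y1 y1)" using diff by fastforce
  then show "U (b,0)" using y1 b by (simp add: sm_self sm_zero)
qed

lemma K_rho: "K b \<Longrightarrow> x < 2^n \<Longrightarrow> K (sm (rho ((b + x) mod 2^n)) (rho x))"
proof -
  assume Kb: "K b" and x: "x < 2^n"
  define xb where "xb = (b + x) mod 2^n"
  have xbl: "xb < 2^n" by (simp add: xb_def)
  have b: "b < 2^n" "U (0,b)" using Kb by (auto simp: K_def)
  have "RR (0,x) ((0 + 0) mod 2^n, (b + x) mod 2^n)"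
    using tr[OF b(2), of "(0,x)"] x by (simp add: V_iff)
  then have "RR (0,x) (0,xb)" by (simp add: xb_def)
  then have "RR (F (0,x)) (F (0,xb))" by (rule R_F)
  then have r1: "RR (x, rho x) (xb, rho xb)" by (simp add: F_eq)
  have "RR (x, rho x) ((b + x) mod 2^n, (0 + rho x) mod 2^n)"
    using tr[OF K_swap[OF Kb], of "(x, rho x)"] x rho_lt by (simp add: V_iff)
  then have r2: "RR (x, rho x) (xb, rho x)" using rho_lt[OF x] by (simp add: xb_def)
  have "RR (xb, rho x) (xb, rho xb)" using r1 r2 R_sym R_trans by blast
  then have "U (sm xb xb, sm (rho xb) (rho x))" using diff by fastforce
  then show ?thesis using xbl by (simp add: sm_self K_def sm_lt xb_def)
qed

lemma K_mult: "K b \<Longrightarrow> K ((j * b) mod 2^n)"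
  using U_mult[of "(0,b)" j] by (simp add: K_def)

lemma K_sub: "K a \<Longrightarrow> K b \<Longrightarrow> b \<le> a \<Longrightarrow> K (a - b)"
proof -
  assume a: "K a" and b: "K b" and ba: "b \<le> a"
  have "RR (0,b) (0,a)" using a b R_sym R_trans by (meson K_def)
  then have "U (sm 0 0, sm a b)" using diff by fastforce
  then show ?thesis using a ba by (simp add: sm_le K_def sm_self less_imp_diff_less)
qed

lemma K_neg: "K b \<Longrightarrow> 0 < b \<Longrightarrow> K (2^n - b)"
proof -
  assume b: "K b" and b0: "0 < b"
  have "RR (0,b) (0,0)" using b R_sym by (simp add: K_def)
  then have "U (sm 0 0, sm 0 b)" using diff by fastforce
  moreover have "sm 0 b = 2^n - b" using b0 by (simp add: sm_def)
  ultimately show ?thesis using b0 by (simp add: sm_self K_def)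
qed

lemma K_class:
  assumes h: "U (0,hh)"
  shows "\<exists>k<n. \<forall>b. K b \<longleftrightarrow> b < 2^n \<and> 2^k dvd b"
proof -
  have hK: "K hh" using h hh_lt by (simp add: K_def)
  define g where "g = (LEAST b. K b \<and> 0 < b)"
  have gK: "K g \<and> 0 < g" unfolding g_def by (rule LeastI[of _ hh]) (use hK hh_lt in simp)
  have gmin: "g \<le> b" if "K b" "0 < b" for b unfolding g_def by (rule Least_le) (use that in simp)
  have ghh: "g \<le> hh" using gmin hK hh_lt by simp
  have gl: "g < 2^n" using ghh hh_lt by simp
  have gd: "g dvd b" if Kb: "K b" for b
  proof -
    define q where "q = b div g"
    have qg: "q * g \<le> b" by (simp add: q_def)
    have bl: "b < 2^n" using Kb by (simp add: K_def)
    have "K ((q * g) mod 2^n)" using K_mult gK by blast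
    then have "K (q * g)" using qg bl by simp
    then have "K (b - q * g)" using K_sub Kb qg by blast
    moreover have "b - q * g = b mod g" by (simp add: q_def minus_div_mult_eq_mod)
    ultimately have Km: "K (b mod g)" by simp
    have "b mod g = 0"
    proof (rule ccontr)
      assume "b mod g \<noteq> 0"
      then have "g \<le> b mod g" using gmin Km by simp
      moreover have "b mod g < g" using gK by simp
      ultimately show False by simp
    qed
    then show ?thesis by (simp add: dvd_eq_mod_eq_0)
  qed
  have gN: "g dvd 2^n"
  proof (rule ccontr)
    assume nd': "\<not> g dvd 2^n"
    define q where "q = (2::nat)^n div g"
    have e: "q * g + 2^n mod g = 2^n" by (simp add: q_def)
    have r0: "0 < 2^n mod g" using nd' by (simp add: dvd_eq_mod_eq_0)
    have qgl: "q * g < 2^n" using e r0 by linarith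
    have "q \<noteq> 0"
    proof
      assume "q = 0"
      then have "2^n mod g = (2::nat)^n" using e by simp
      then have "(2::nat)^n < g" using gK by (metis mod_less_divisor)
      then show False using gl by simp
    qed
    then have qg0: "0 < q * g" using gK by simp
    have "K ((q * g) mod 2^n)" using K_mult gK by blast
    then have "K (q * g)" using qgl by simp
    then have "K (2^n - q * g)" using K_neg qg0 by blast
    moreover have "2^n - q * g = 2^n mod g" using e by simp
    ultimately have "K (2^n mod g)" by simp
    then have "g \<le> 2^n mod g" using gmin r0 by simp
    moreover have "2^n mod g < g" using gK by simp
    ultimately show False by simp
  qed
  obtain k where k: "k \<le> n" "g = 2^k" using pow2_dvd[OF gN] by blast
  have "k \<noteq> n" using k gl by auto
  then have kn: "k < n" using k by simp
  have "K b \<longleftrightarrow> b < 2^n \<and> 2^k dvd b" for b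
  proof
    assume "K b" then show "b < 2^n \<and> 2^k dvd b" using gd k by (simp add: K_def)
  next
    assume b: "b < 2^n \<and> 2^k dvd b"
    then obtain t where t: "b = 2^k * t" by blast
    have "K ((t * g) mod 2^n)" using K_mult gK by blast
    then show "K b" using t k b by (simp add: mult.commute)
  qed
  then show ?thesis using kn by blast
qed

lemma all_R:
  assumes u: "U u" "u \<noteq> (0,0)" and x: "x \<in> Vspace n" and y: "y \<in> Vspace n"
  shows "RR x y"
proof -
  obtain k where kn: "k < n" and Kc: "\<forall>b. K b \<longleftrightarrow> b < 2^n \<and> 2^k dvd b"
    using K_class[OF U_0h[OF u]] by blast
  show ?thesis
  proof (cases "k = 0")
    case True
    then have allK: "b < 2^n \<Longrightarrow> K b" for b using Kc by simp
    have Uab: "U (a,b)" if "a < 2^n" "b < 2^n" for a b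
    proof -
      have "U (a,0)" using K_swap allK that by blast
      moreover have "RR (a,0) ((0 + a) mod 2^n, (b + 0) mod 2^n)"
        using tr[of "(0,b)" "(a,0)"] allK that by (simp add: K_def V_iff)
      then have "RR (a,0) (a,b)" using that by simp
      ultimately show ?thesis using R_trans by blast
    qed
    have Uyx: "U (sm (fst y) (fst x), sm (snd y) (snd x))" using Uab sm_lt by blast
    have "RR x ((sm (fst y) (fst x) + fst x) mod 2^n, (sm (snd y) (snd x) + snd x) mod 2^n)"
      using tr[OF Uyx x] by simp
    then show ?thesis using x y by (cases x, cases y) (simp add: V_iff sm_add)
  next
    case False
    have pres: "\<forall>a b. a < 2^n \<longrightarrow> b < 2^n \<longrightarrow> a mod 2^k = b mod 2^k \<longrightarrow> rho a mod 2^k = rho b mod 2^k"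
    proof (intro allI impI)
      fix a b :: nat assume a: "a < 2^n" and b: "b < 2^n" and e: "a mod 2^k = b mod 2^k"
      have "2^k dvd sm b a" using dvd_sm[of k b a] kn a b e by simp
      then have Kd: "K (sm b a)" using Kc sm_lt by blast
      have "(sm b a + a) mod 2^n = b" by (rule sm_add[OF b a])
      then have "K (sm (rho b) (rho a))" using K_rho[OF Kd a] by simp
      then have "2^k dvd sm (rho b) (rho a)" using Kc by blast
      then have "rho b mod 2^k = rho a mod 2^k"
        using dvd_sm[of k "rho b" "rho a"] kn rho_lt a b by simp
      then show "rho a mod 2^k = rho b mod 2^k" by simp
    qed
    have False using no_class_pres[OF _ kn pres] False by simp
    then show ?thesis ..
  qed
qed

lemma same_block: "B \<in> P \<Longrightarrow> B' \<in> P \<Longrightarrow> x \<in> B \<Longrightarrow> x \<in> B' \<Longrightarrow> B = B'"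
proof (rule ccontr)
  assume "B \<in> P" "B' \<in> P" "x \<in> B" "x \<in> B'" "B \<noteq> B'"
  then have "disjnt B B'" using part unfolding partition_on_def pairwise_def by blast
  then show False using \<open>x \<in> B\<close> \<open>x \<in> B'\<close> unfolding disjnt_def by blast
qed

lemma part_result: "P = {Vspace n} \<or> P = {{x} | x. x \<in> Vspace n}"
proof (cases "\<exists>u. U u \<and> u \<noteq> (0,0)")
  case True
  then obtain u where u: "U u" "u \<noteq> (0,0)" by blast
  have BV: "B = Vspace n" if B: "B \<in> P" for B
  proof
    show "B \<subseteq> Vspace n" using part B unfolding partition_on_def by blast
    show "Vspace n \<subseteq> B"
    proof
      fix y assume y: "y \<in> Vspace n"
      have "B \<noteq> {}" using part B unfolding partition_on_def by auto
      then obtain x where x: "x \<in> B" by blast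
      have xV: "x \<in> Vspace n" using part B x unfolding partition_on_def by blast
      have "RR x y" using all_R[OF u xV y] .
      then obtain B' where "B' \<in> P" "x \<in> B'" "y \<in> B'" unfolding RR_def by blast
      then show "y \<in> B" using same_block[OF B _ x] by blast
    qed
  qed
  have "P \<noteq> {}" using part zV unfolding partition_on_def by blast
  then have "P = {Vspace n}" using BV by blast
  then show ?thesis ..
next
  case False
  have eq: "x = y" if "RR x y" for x y
  proof -
    have xy: "x \<in> Vspace n" "y \<in> Vspace n" using R_V[OF that] by auto
    have "U (sm (fst y) (fst x), sm (snd y) (snd x))" by (rule diff[OF that])
    then have "sm (fst y) (fst x) = 0" "sm (snd y) (snd x) = 0" using False by auto
    then have "(sm (fst y) (fst x) + fst x) mod 2^n = fst x" "(sm (snd y) (snd x) + snd x) mod 2^n = snd x"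
      using xy by (simp_all add: V_iff)
    then show "x = y" using xy by (cases x, cases y) (simp add: V_iff sm_add)
  qed
  have "P = {{x} | x. x \<in> Vspace n}"
  proof
    show "P \<subseteq> {{x} | x. x \<in> Vspace n}"
    proof
      fix B assume B: "B \<in> P"
      have "B \<noteq> {}" using part B unfolding partition_on_def by auto
      then obtain x where x: "x \<in> B" by blast
      have xV: "x \<in> Vspace n" using part B x unfolding partition_on_def by blast
      have "y = x" if "y \<in> B" for y using eq[of x y] B x that unfolding RR_def by blast
      then have "B = {x}" using x by blast
      then show "B \<in> {{x} | x. x \<in> Vspace n}" using xV by blast
    qed
    show "{{x} | x. x \<in> Vspace n} \<subseteq> P"
    proof
      fix C assume "C \<in> {{x} | x. x \<in> Vspace n}"
      then obtain x where C: "C = {x}" and xV: "x \<in> Vspace n" by blast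
      obtain B where B: "B \<in> P" "x \<in> B" using part xV unfolding partition_on_def by blast
      have "y = x" if "y \<in> B" for y using eq[of x y] B that unfolding RR_def by blast
      then have "B = {x}" using B by blast
      then show "C \<in> P" using B C by simp
    qed
  qed
  then show ?thesis ..
qed

end

context ctx begin

lemma trans_G: "x \<in> Vspace n \<Longrightarrow> y \<in> Vspace n \<Longrightarrow> \<exists>g\<in>Gam. g x = y"
proof -
  assume x: "x \<in> Vspace n" and y: "y \<in> Vspace n"
  define h where "h = (sm (fst y) (fst (F x)), sm (snd y) (snd (F x)))"
  have hV: "h \<in> Vspace n" by (simp add: h_def V_iff sm_def)
  define g where "g = restrict (sigma n h \<circ> F \<circ> sigma n (0,0)) (Vspace n)"
  have "g \<in> Gam" unfolding g_def by (rule gen_in[OF zV hV])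
  moreover have "g x = y"
  proof -
    have FV: "F x \<in> Vspace n" using F_V[OF x] .
    have e1: "(fst (F x) + sm (fst y) (fst (F x))) mod 2^n = fst y"
      using sm_add[of "fst y" "fst (F x)"] FV y by (simp add: V_iff add.commute)
    have e2: "(snd (F x) + sm (snd y) (snd (F x))) mod 2^n = snd y"
      using sm_add[of "snd y" "snd (F x)"] FV y by (simp add: V_iff add.commute)
    have "g x = sigma n h (F x)" using x by (simp add: g_def sig0)
    also have "\<dots> = y" by (simp add: sigma_def h_def e1 e2)
    finally show ?thesis .
  qed
  ultimately show ?thesis by blast
qed

theorem prim: "primitive_on (Vspace n) Gam"
  unfolding primitive_on_def
proof (intro conjI allI impI)
  show "\<forall>x\<in>Vspace n. \<forall>y\<in>Vspace n. \<exists>g\<in>Gam. g x = y" using trans_G by blast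
next
  fix P assume "partition_on (Vspace n) P \<and> (\<forall>g\<in>Gam. \<forall>B\<in>P. g ` B \<in> P)"
  then interpret blk m \<delta> n gs L P by unfold_locales auto
  show "P = {Vspace n} \<or> P = {{x} |x. x \<in> Vspace n}" by (rule part_result)
qed

end


theorem mainTheorem3:
  fixes m \<delta> n :: nat and gs :: "nat \<Rightarrow> nat \<Rightarrow> nat" and L :: "nat \<Rightarrow> nat"
  assumes "m > 1" and "\<delta> > 1" and "n = m * \<delta>"
    and "\<forall>j<\<delta>. bij_betw (gs j) {..<2 ^ m} {..<2 ^ m}"
    and "\<forall>j<\<delta>. gs j 0 \<noteq> 0"
    and "inv_linear n L"
    and "non_type_preserving m \<delta> L"
  shows "primitive_on (Vspace n) (Gamma_inf n (L \<circ> parallel_sbox m \<delta> gs))"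
proof -
  interpret ctx m \<delta> n gs L
    using assms(1-4,6,7) by unfold_locales auto
  have "L \<circ> parallel_sbox m \<delta> gs = rho" by (simp add: rho_def S_def)
  then show ?thesis using prim by (simp add: Gam_def)
qed

end
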